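(* Let $q$ be odd, $\alpha,\beta\in\mathbb{F}_{q^2}$ with $\alpha\ne0$ and $(\beta^q-\beta)^2+4\alpha^{q+1}$ a nonsquare in $\mathbb{F}_q$, let $w=\epsilon^2$ and $R_2=(0,w\epsilon,1)$. Then (1) $\mathrm{pedal}(R_2)$ consists exactly of the points $Q'_x=(x,\,2\alpha x^2+(\beta-\beta^q)x^{q+1}+w\epsilon,\,1)$ with $x\in\mathbb{F}_{q^2}$ satisfying $\alpha x^2-\alpha^q x^{2q}+(\beta-\beta^q)x^{q+1}+2w\epsilon=0$; (2) the points of $\mathrm{pedal}(R_2)$ lie on the lines of the Baer pencil joining the vertex $U_\infty=(1,0,0)$ to the Baer subline $\{E_{s-w\epsilon}=(0,s-w\epsilon,1): s\in\mathbb{F}_q\}\cup\{(0,1,0)\}$.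
   Context: Points of $\mathrm{PG}(2,q^2)$ have homogeneous coordinates $(x,y,z)$. $\zeta$ is a primitive element of $\mathbb{F}_{q^2}$ and $\epsilon=\zeta^{(q+1)/2}$ (so $\epsilon^q=-\epsilon$ and $w=\epsilon^2$ is a primitive element of $\mathbb{F}_q$). $\mathcal U_{\alpha\beta}=\{(x,\alpha x^2+\beta x^{q+1}+r,1): x\in\mathbb{F}_{q^2}, r\in\mathbb{F}_q\}\cup\{(0,1,0)\}$, which under the hypotheses is a unital (a set of $q^3+1$ points meeting every line in $1$ or $q+1$ points). For a point $P$ not on the unital, $\mathrm{pedal}(P)$ is the set of points of contact of the $q+1$ tangent lines (lines meeting the unital in exactly one point) through $P$. A Baer pencil is the set of $q+1$ lines joining a vertex point to the $q+1$ points of a Baer subline (a set of points of a line projectively equivalent to $\mathrm{PG}(1,q)$). *)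

theory Defs
  imports Main
begin

type_synonym 'a vec3 = "'a \<times> 'a \<times> 'a"

definition scal3 :: "'a::field \<Rightarrow> 'a vec3 \<Rightarrow> 'a vec3" where
  "scal3 c v = (case v of (x, y, z) \<Rightarrow> (c * x, c * y, c * z))"

definition dot3 :: "'a::field vec3 \<Rightarrow> 'a vec3 \<Rightarrow> 'a" where
  "dot3 a v = (case a of (a1, a2, a3) \<Rightarrow> case v of (x, y, z) \<Rightarrow> a1 * x + a2 * y + a3 * z)"

definition pt :: "'a::field vec3 \<Rightarrow> 'a vec3 set" where
  "pt v = {scal3 c v | c. c \<noteq> 0}"

definition pg_points :: "'a::field vec3 set set" where
  "pg_points = {pt v | v. v \<noteq> (0, 0, 0)}"

definition pg_line :: "'a::field vec3 \<Rightarrow> 'a vec3 set set" where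
  "pg_line a = {pt v | v. v \<noteq> (0, 0, 0) \<and> dot3 a v = 0}"

definition pg_lines :: "'a::field vec3 set set set" where
  "pg_lines = {pg_line a | a. a \<noteq> (0, 0, 0)}"

definition subfield_q :: "nat \<Rightarrow> 'a::field set" where
  "subfield_q q = {x. x ^ q = x}"

definition unital_ab :: "nat \<Rightarrow> 'a::field \<Rightarrow> 'a \<Rightarrow> 'a vec3 set set" where
  "unital_ab q \<alpha> \<beta> =
     {pt (x, \<alpha> * x ^ 2 + \<beta> * x ^ (q + 1) + r, 1) | x r. r \<in> subfield_q q}
     \<union> {pt (0, 1, 0)}"

definition tangent_line :: "'a::field vec3 set set \<Rightarrow> 'a vec3 set set \<Rightarrow> bool" where
  "tangent_line U l \<longleftrightarrow> l \<in> pg_lines \<and> card (l \<inter> U) = 1"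

definition pedal :: "'a::field vec3 set set \<Rightarrow> 'a vec3 set \<Rightarrow> 'a vec3 set set" where
  "pedal U P = {Q. \<exists>l. tangent_line U l \<and> P \<in> l \<and> l \<inter> U = {Q}}"

definition primitive_elem :: "'a::field \<Rightarrow> bool" where
  "primitive_elem \<zeta> \<longleftrightarrow> (\<forall>x. x \<noteq> 0 \<longrightarrow> (\<exists>k::nat. x = \<zeta> ^ k))"

definition pencil :: "'a::field vec3 set \<Rightarrow> 'a vec3 set set \<Rightarrow> 'a vec3 set set set" where
  "pencil V B = {l \<in> pg_lines. V \<in> l \<and> (\<exists>E\<in>B. E \<in> l)}"

end

theory Submission
  imports Defs "HOL-Computational_Algebra.Primes" "HOL-Computational_Algebra.Polynomial" "HOL-Number_Theory.Cong" "HOL-Number_Theory.Prime_Powers"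
begin


lemma fermat_field:
  fixes x :: "'a::field"
  assumes fin: "finite (UNIV :: 'a set)"
  shows "x ^ card (UNIV :: 'a set) = x"
proof (cases "x = 0")
  case False
  have cpos: "card (UNIV :: 'a set) > 0" using fin by (simp add: card_gt_0_iff)
  have fin2: "finite (UNIV - {0::'a})" using fin by simp
  have "x * (\<Prod>y\<in>UNIV-{0}. x * y) = x * x ^ (card (UNIV :: 'a set) - 1) * \<Prod>(UNIV-{0::'a})"
    using fin by (simp add: prod.distrib mult_ac card_Diff_singleton)
  also have "x * x ^ (card (UNIV :: 'a set) - 1) = x ^ Suc (card (UNIV :: 'a set) - 1)"
    by (subst power_Suc) auto
  also have "Suc (card (UNIV :: 'a set) - 1) = card (UNIV :: 'a set)"
    using cpos by simp
  also have "(\<Prod>y\<in>UNIV-{0}. x * y) = (\<Prod>y\<in>UNIV-{0::'a}. y)"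
    by (rule prod.reindex_bij_witness[of _ "\<lambda>y. y / x" "\<lambda>y. x * y"]) (use False in auto)
  finally show ?thesis
    using fin2 by simp
qed (use fin in \<open>simp add: card_gt_0_iff\<close>)

lemma fermat_field1:
  fixes x :: "'a::field"
  assumes fin: "finite (UNIV :: 'a set)" and "x \<noteq> 0"
  shows "x ^ (card (UNIV :: 'a set) - 1) = 1"
proof -
  have cpos: "card (UNIV :: 'a set) > 0" using fin by (simp add: card_gt_0_iff)
  have "x * x ^ (card (UNIV :: 'a set) - 1) = x * 1"
    using fermat_field[OF fin, of x] cpos by (simp flip: power_Suc)
  thus ?thesis using assms(2) by simp
qed

lemma char_prime_fin:
  assumes fin: "finite (UNIV :: 'a::field set)"
  shows "prime CHAR('a)"
  using finite_imp_CHAR_pos[OF fin] prime_CHAR_semidom by blast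

lemma of_nat_mult_closed:
  fixes A :: "'a::field set"
  assumes "0 \<in> A" "\<forall>a\<in>A. \<forall>b\<in>A. a + b \<in> A" "a \<in> A"
  shows "of_nat n * a \<in> A"
  using assms by (induction n) (auto simp: distrib_right)

lemma card_char_power_aux:
  fixes S :: "'a::field set"
  assumes fin: "finite (UNIV :: 'a set)" and "finite S"
  shows "\<exists>A k. 0 \<in> A \<and> (\<forall>a\<in>A. \<forall>b\<in>A. a + b \<in> A) \<and> S \<subseteq> A \<and> card A = CHAR('a) ^ k"
  using assms(2)
proof (induction S rule: finite_induct)
  case empty
  show ?case by (intro exI[of _ "{0}"] exI[of _ 0]) auto
next
  case (insert x S)
  then obtain A k where A0: "0 \<in> A" and Aadd: "\<forall>a\<in>A. \<forall>b\<in>A. a + b \<in> A"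
    and SA: "S \<subseteq> A" and cA: "card A = CHAR('a) ^ k" by blast
  define p where "p = CHAR('a)"
  have pp: "prime p" unfolding p_def using char_prime_fin[OF fin] .
  hence p1: "p > 1" using prime_gt_1_nat by blast
  have finA: "finite A" by (rule rev_finite_subset[OF fin subset_UNIV])
  show ?case
  proof (cases "x \<in> A")
    case True
    thus ?thesis using A0 Aadd SA cA by (intro exI[of _ A] exI[of _ k]) simp
  next
    case False
    define A' where "A' = (\<lambda>(a,i). a + of_nat i * x) ` (A \<times> {..<p})"
    have neg: "- a \<in> A" if "a \<in> A" for a
    proof -
      have "of_nat (p - 1) * a + a = of_nat p * a"
        using p1 by (simp add: of_nat_diff algebra_simps)
      also have "\<dots> = 0" unfolding p_def by simp
      finally have "- a = of_nat (p - 1) * a" by (simp add: add_eq_0_iff2)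
      thus ?thesis using of_nat_mult_closed[OF A0 Aadd that] by simp
    qed
    have gen: "i' = j'" if a1: "a1 \<in> A" and a2: "a2 \<in> A" and ij: "j' < i'" "i' < p"
        and e: "a1 + of_nat i' * (x::'a) = a2 + of_nat j' * x" for a1 a2 i' j'
    proof -
      define k where "k = i' - j'"
      have k0: "0 < k" "k < p" using ij unfolding k_def by linarith+
      have ok: "(of_nat k :: 'a) = of_nat i' - of_nat j'" using ij unfolding k_def
        by (simp add: of_nat_diff)
      have e2: "a2 = a1 + of_nat i' * x - of_nat j' * x" using e by (simp add: eq_diff_eq)
      have "of_nat k * x = a2 - a1"
        unfolding e2 ok by (simp add: left_diff_distrib)
      also have "\<dots> = a2 + (- a1)" by simp
      also have "\<dots> \<in> A" using Aadd a2 neg[OF a1] by blast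
      finally have kx: "of_nat k * x \<in> A" .
      have knz: "(of_nat k :: 'a) \<noteq> 0"
      proof
        assume "(of_nat k :: 'a) = 0"
        hence "p dvd k" unfolding p_def by (simp only: of_nat_eq_0_iff_char_dvd)
        hence "p \<le> k" using k0(1) by (rule dvd_imp_le)
        thus False using k0(2) by simp
      qed
      define c where "c = card (UNIV :: 'a set)"
      have c2: "c \<ge> 2"
      proof -
        have "card {0::'a,1} \<le> c" unfolding c_def by (rule card_mono[OF fin]) simp
        thus ?thesis by simp
      qed
      have "(of_nat (k ^ (c - 2)) :: 'a) * (of_nat k * x) = (of_nat k) ^ (c - 1) * x"
      proof -
        have e1: "c - 1 = Suc (c - 2)" using c2 by simp
        show ?thesis by (simp only: e1 power_Suc2 of_nat_power mult.assoc)
      qed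
      also have "\<dots> = x" using fermat_field1[OF fin knz] by (simp add: c_def)
      finally have xe: "of_nat (k ^ (c - 2)) * (of_nat k * x) = x" .
      have "of_nat (k ^ (c - 2)) * (of_nat k * x) \<in> A" by (rule of_nat_mult_closed[OF A0 Aadd kx])
      hence "x \<in> A" unfolding xe .
      thus ?thesis using False by simp
    qed
    have inj: "inj_on (\<lambda>(a,i). a + of_nat i * x) (A \<times> {..<p})"
    proof (rule inj_onI)
      fix u v assume u: "u \<in> A \<times> {..<p}" and v: "v \<in> A \<times> {..<p}"
        and uv: "(\<lambda>(a,i). a + of_nat i * x) u = (\<lambda>(a,i). a + of_nat i * x) v"
      obtain a i where ai: "u = (a, i)" by (cases u)
      obtain a' j where aj: "v = (a', j)" by (cases v)
      have a: "a \<in> A" "i < p" using u ai by auto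
      have a': "a' \<in> A" "j < p" using v aj by auto
      have eq: "a + of_nat i * x = a' + of_nat j * x" using uv ai aj by simp
      have "i = j"
      proof (cases i j rule: linorder_cases)
        case less
        thus ?thesis using gen[OF a'(1) a(1) less a'(2)] eq by simp
      next
        case greater
        thus ?thesis using gen[OF a(1) a'(1) greater a(2)] eq by simp
      qed simp
      with eq have "a = a'" by simp
      with \<open>i = j\<close> show "u = v" using ai aj by simp
    qed
    have cA': "card A' = CHAR('a) ^ Suc k"
      unfolding A'_def using card_image[OF inj] finA by (simp add: card_cartesian_product cA p_def)
    have "0 \<in> A'"
    proof -
      have "(0, 0) \<in> A \<times> {..<p}" using A0 p1 by auto
      hence "(\<lambda>(a,i). a + of_nat i * x) (0, 0) \<in> A'" unfolding A'_def by (rule imageI)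
      thus ?thesis by simp
    qed
    moreover have "\<forall>a\<in>A'. \<forall>b\<in>A'. a + b \<in> A'"
    proof (intro ballI)
      fix u v assume "u \<in> A'" "v \<in> A'"
      then obtain a i b j where a: "a \<in> A" "i \<in> {..<p}" and b: "b \<in> A" "j \<in> {..<p}"
        and uv: "u = a + of_nat i * x" "v = b + of_nat j * x" unfolding A'_def by auto
      have "of_nat (i + j) = (of_nat ((i + j) mod p) :: 'a)"
        unfolding p_def by (simp only: of_nat_eq_iff_cong_CHAR cong_def mod_mod_trivial)
      hence ij: "of_nat i + of_nat j = (of_nat ((i + j) mod p) :: 'a)" by simp
      have "(a + of_nat i * x) + (b + of_nat j * x) = (a + b) + (of_nat i + of_nat j) * x"
        by (simp add: algebra_simps)
      also have "\<dots> = (\<lambda>(a,i). a + of_nat i * x) (a + b, (i + j) mod p)" by (simp add: ij)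
      finally have e: "(a + of_nat i * x) + (b + of_nat j * x) = (\<lambda>(a,i). a + of_nat i * x) (a + b, (i + j) mod p)" .
      have "(a + b, (i + j) mod p) \<in> A \<times> {..<p}" using a b Aadd p1 by auto
      hence "(a + of_nat i * x) + (b + of_nat j * x) \<in> A'" unfolding A'_def e by (rule imageI)
      thus "u + v \<in> A'" unfolding uv .
    qed
    moreover have "insert x S \<subseteq> A'"
    proof -
      have "x \<in> A'"
      proof -
        have "(0, 1) \<in> A \<times> {..<p}" using A0 p1 by auto
        hence "(\<lambda>(a,i). a + of_nat i * x) (0, 1) \<in> A'" unfolding A'_def by (rule imageI)
        thus ?thesis by simp
      qed
      moreover have "S \<subseteq> A'"
      proof
        fix s assume "s \<in> S"
        hence "(s, 0) \<in> A \<times> {..<p}" using SA p1 by auto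
        hence "(\<lambda>(a,i). a + of_nat i * x) (s, 0) \<in> A'" unfolding A'_def by (rule imageI)
        thus "s \<in> A'" by simp
      qed
      ultimately show ?thesis by simp
    qed
    ultimately show ?thesis using cA' by (intro exI[of _ A'] exI[of _ "Suc k"]) simp
  qed
qed

lemma card_char_power:
  assumes fin: "finite (UNIV :: 'a::field set)"
  shows "\<exists>k. card (UNIV :: 'a set) = CHAR('a) ^ k"
proof -
  obtain A :: "'a set" and k where "UNIV \<subseteq> A" "card A = CHAR('a) ^ k"
    using card_char_power_aux[OF fin fin] by blast
  hence "A = UNIV" by auto
  thus ?thesis using \<open>card A = CHAR('a) ^ k\<close> by blast
qed


lemma card_ge2:
  assumes fin: "finite (UNIV :: 'a::field set)"
  shows "card (UNIV :: 'a set) \<ge> 2"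
proof -
  have "card {0::'a,1} \<le> card (UNIV :: 'a set)" by (rule card_mono[OF fin]) simp
  thus ?thesis by simp
qed

lemma q_char_power:
  assumes fin: "finite (UNIV :: 'a::field set)" and card: "card (UNIV :: 'a set) = q ^ 2"
  shows "\<exists>j. q = CHAR('a) ^ j"
proof -
  obtain k where k: "card (UNIV :: 'a set) = CHAR('a) ^ k" using card_char_power[OF fin] by blast
  have "q ^ 2 = CHAR('a) ^ k" using k card by simp
  from power_eq_prime_powerD[OF char_prime_fin[OF fin] _ this] obtain i where
    "normalize q = normalize (CHAR('a) ^ i)" by auto
  thus ?thesis by auto
qed

lemma frob_add:
  assumes fin: "finite (UNIV :: 'a::field set)" and card: "card (UNIV :: 'a set) = q ^ 2"
  shows "(x + y :: 'a) ^ q = x ^ q + y ^ q"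
proof -
  obtain j where "q = CHAR('a) ^ j" using q_char_power[OF fin card] by blast
  thus ?thesis using freshmans_dream'[OF char_prime_fin[OF fin]] by blast
qed

lemma frob_invol:
  assumes fin: "finite (UNIV :: 'a::field set)" and card: "card (UNIV :: 'a set) = q ^ 2"
  shows "((x :: 'a) ^ q) ^ q = x"
proof -
  have "(x ^ q) ^ q = x ^ (q ^ 2)" by (simp add: power_mult[symmetric] power2_eq_square)
  also have "\<dots> = x" using fermat_field[OF fin, of x] card by simp
  finally show ?thesis .
qed

lemma two_nz:
  assumes fin: "finite (UNIV :: 'a::field set)" and card: "card (UNIV :: 'a set) = q ^ 2"
    and odd: "odd q"
  shows "(2 :: 'a) \<noteq> 0"
proof
  assume h: "(2 :: 'a) = 0"
  have "(of_nat 2 :: 'a) = 0" using h by simp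
  hence "CHAR('a) dvd 2" by (simp only: of_nat_eq_0_iff_char_dvd)
  hence c2: "CHAR('a) = 2"
    by (rule primes_dvd_imp_eq[OF char_prime_fin[OF fin] two_is_prime_nat])
  obtain j where qj: "q = CHAR('a) ^ j" using q_char_power[OF fin card] by blast
  have "j = 0" using odd qj c2 by (cases j) auto
  hence "q = 1" using qj by simp
  thus False using card_ge2[OF fin] card by simp
qed

lemma eps_props:
  fixes \<zeta> :: "'a::field"
  assumes fin: "finite (UNIV :: 'a set)" and card: "card (UNIV :: 'a set) = q ^ 2"
    and odd: "odd q" and prim: "primitive_elem \<zeta>"
  shows "\<zeta> ^ ((q + 1) div 2) \<noteq> 0 \<and> (\<zeta> ^ ((q + 1) div 2)) ^ q = - (\<zeta> ^ ((q + 1) div 2))"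
proof -
  have two: "(2::'a) \<noteq> 0" using two_nz[OF fin card odd] .
  have q1: "q \<noteq> 1" using card_ge2[OF fin] card by auto
  have q0: "q \<noteq> 0"
  proof
    assume "q = 0" with odd show False by simp
  qed
  have z0: "\<zeta> \<noteq> 0"
  proof
    assume z: "\<zeta> = 0"
    have "(-1::'a) \<noteq> 0" by simp
    then obtain k where "(-1::'a) = \<zeta> ^ k" using prim unfolding primitive_elem_def by blast
    hence "(-1::'a) = 0 ^ k" using z by simp
    hence "(-1::'a) = 1" by (cases k) auto
    hence "1 + 1 = (0::'a)" by (metis add.right_inverse)
    hence "(2::'a) = 0" by simp
    thus False using two by simp
  qed
  define M where "M = (q + 1) div 2 * (q - 1)"
  have M2: "2 * M = q ^ 2 - 1"
  proof -
    have "2 * ((q + 1) div 2) = q + 1" using odd by simp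
    hence "2 * M = (q + 1) * (q - 1)" unfolding M_def by (metis mult.assoc)
    also have "\<dots> = q ^ 2 - 1" by (simp add: power2_eq_square algebra_simps)
    finally show ?thesis .
  qed
  have Mpos: "M > 0" unfolding M_def using q0 q1 by auto
  define h where "h = \<zeta> ^ M"
  have "h ^ 2 = 1"
    unfolding h_def using fermat_field1[OF fin z0] card M2
    by (simp add: power_mult[symmetric] mult.commute)
  hence "(h - 1) * (h + 1) = 0" by (simp add: algebra_simps power2_eq_square)
  hence hcases: "h = 1 \<or> h = -1" by (auto simp: eq_neg_iff_add_eq_0)
  have "h \<noteq> 1"
  proof
    assume h1: "h = 1"
    define P where "P = (monom (1::'a) M - 1)"
    have polyP: "poly P x = x ^ M - 1" for x unfolding P_def by (simp add: poly_monom)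
    have P0: "P \<noteq> 0"
    proof
      assume "P = 0"
      hence "poly P 0 = 0" by simp
      thus False using polyP[of 0] Mpos by (simp add: power_0_left)
    qed
    have degP: "degree P \<le> M" unfolding P_def
      by (rule degree_diff_le) (auto intro: degree_monom_le)
    have sub: "UNIV - {0} \<subseteq> {x. poly P x = 0}"
    proof
      fix x :: 'a assume "x \<in> UNIV - {0}"
      then obtain k where "x = \<zeta> ^ k" using prim unfolding primitive_elem_def by blast
      hence "x ^ M = h ^ k" unfolding h_def by (simp add: power_mult[symmetric] mult.commute)
      thus "x \<in> {x. poly P x = 0}" using h1 polyP by simp
    qed
    have "card (UNIV - {0::'a}) \<le> card {x. poly P x = 0}"
      by (rule card_mono[OF rev_finite_subset[OF fin subset_UNIV] sub])
    also have "\<dots> \<le> M" using card_poly_roots_bound[OF P0] degP by simp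
    finally have "q ^ 2 - 1 \<le> M" using card fin by (simp add: card_Diff_singleton)
    thus False using M2 Mpos by simp
  qed
  with hcases have hm: "h = -1" by simp
  have "(\<zeta> ^ ((q + 1) div 2)) ^ q = (\<zeta> ^ ((q + 1) div 2)) ^ (q - 1) * \<zeta> ^ ((q + 1) div 2)"
    using q0 by (simp add: power_Suc2[symmetric])
  also have "(\<zeta> ^ ((q + 1) div 2)) ^ (q - 1) = h" unfolding h_def M_def by (simp add: power_mult)
  finally show ?thesis using hm z0 by simp
qed



lemma pt_self: "v \<in> pt v"
proof -
  have "scal3 1 v = v" by (cases v) (auto simp: scal3_def)
  thus ?thesis unfolding pt_def by (metis (mono_tags, lifting) mem_Collect_eq one_neq_zero)
qed

lemma pt_eq_aff:
  assumes "pt (x, y, 1) = pt (x', y', (1::'a::field))"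
  shows "x = x' \<and> y = y'"
proof -
  have "(x, y, 1) \<in> pt (x', y', (1::'a))" using assms pt_self by metis
  then obtain c where "c \<noteq> 0" "(x, y, 1) = scal3 c (x', y', 1)" unfolding pt_def by blast
  thus ?thesis by (simp add: scal3_def)
qed

lemma pt_aff_ne_inf: "pt (x, y, 1) \<noteq> pt (0, 1, (0::'a::field))"
proof
  assume "pt (x, y, 1) = pt (0, 1, (0::'a::field))"
  hence "(x, y, 1) \<in> pt (0, 1, (0::'a))" using pt_self by metis
  then obtain c where "(x, y, 1) = scal3 c (0, 1, (0::'a))" unfolding pt_def by blast
  thus False by (simp add: scal3_def)
qed

lemma pt_in_line:
  "pt v \<in> pg_line a \<longleftrightarrow> v \<noteq> (0, 0, 0) \<and> dot3 a (v :: 'a::field vec3) = 0"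
proof
  assume "pt v \<in> pg_line a"
  then obtain u where u: "pt v = pt u" "u \<noteq> (0, 0, 0)" "dot3 a u = 0" unfolding pg_line_def by blast
  have "v \<in> pt u" using u(1) pt_self by metis
  then obtain c where c: "c \<noteq> 0" "v = scal3 c u" unfolding pt_def by blast
  obtain u1 u2 u3 where uu: "u = (u1, u2, u3)" by (cases u) auto
  obtain a1 a2 a3 where aa: "a = (a1, a2, a3)" by (cases a) auto
  have "v \<noteq> (0, 0, 0)" using c u(2) by (auto simp: scal3_def uu)
  moreover have "dot3 a v = c * dot3 a u" using c
    by (simp add: scal3_def dot3_def uu aa algebra_simps)
  ultimately show "v \<noteq> (0, 0, 0) \<and> dot3 a v = 0" using u(3) by simp
next
  assume "v \<noteq> (0, 0, 0) \<and> dot3 a v = 0"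
  thus "pt v \<in> pg_line a" unfolding pg_line_def by blast
qed

lemma line_elem: "P \<in> pg_line a \<Longrightarrow> \<exists>v. P = pt v"
  unfolding pg_line_def by blast

lemma dot3_simp [simp]: "dot3 (a1, a2, a3) (x, y, z) = a1 * x + a2 * y + a3 * z"
  by (simp add: dot3_def)


locale frobq =
  fixes q :: nat and \<alpha> \<beta> \<epsilon> w :: "'a::field"
  assumes fa: "\<And>x y :: 'a. (x + y) ^ q = x ^ q + y ^ q"
    and inv: "\<And>x :: 'a. (x ^ q) ^ q = x"
    and two: "(2::'a) \<noteq> 0"
    and oddq: "odd q"
    and e0: "\<epsilon> \<noteq> 0" and eq: "\<epsilon> ^ q = - \<epsilon>"
    and wdef: "w = \<epsilon> ^ 2"
    and anz: "\<alpha> \<noteq> 0"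
    and nonsq: "\<not> (\<exists>y \<in> subfield_q q. y ^ 2 = (\<beta> ^ q - \<beta>) ^ 2 + 4 * \<alpha> ^ (q + 1))"
begin

lemma q0: "q > 0" using oddq by (cases q) auto

lemma s0 [simp]: "(0::'a) ^ q = 0" using q0 by (simp add: power_0_left)

lemma s_neg [simp]: fixes x :: 'a shows "(- x) ^ q = - (x ^ q)"
  using oddq by (simp add: power_minus_odd)

lemma s_diff [simp]: "(x - y :: 'a) ^ q = x ^ q - y ^ q"
  using fa[of x "- y"] by simp

lemma s_2 [simp]: "(2::'a) ^ q = 2"
  by (metis fa one_add_one power_one)

lemma s_sq [simp]: "(x ^ 2 :: 'a) ^ q = (x ^ q) ^ 2"
  by (simp add: power_mult[symmetric] mult.commute)

lemma s_sq' : "(x :: 'a) ^ (2 * q) = (x ^ q) ^ 2"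
  by (simp add: power_mult[symmetric] mult.commute)

lemma s_q1 : "(x :: 'a) ^ (q + 1) = x ^ q * x"
  by simp

declare fa [simp] inv [simp] power_mult_distrib [simp]

definition H :: "'a \<Rightarrow> 'a" where
  "H x = \<alpha> * x ^ 2 - \<alpha> ^ q * (x ^ q) ^ 2 + (\<beta> - \<beta> ^ q) * (x ^ q * x)"

definition D :: "'a \<Rightarrow> 'a \<Rightarrow> 'a" where
  "D m x = H x + m ^ q * x ^ q - m * x - 2 * w * \<epsilon>"

definition m0 :: "'a \<Rightarrow> 'a" where
  "m0 x = 2 * \<alpha> * x + (\<beta> - \<beta> ^ q) * x ^ q"

lemma wq: "(w * \<epsilon>) ^ q = - (w * \<epsilon>)"
  by (simp add: wdef eq)

lemma w0: "w \<noteq> 0" using e0 by (simp add: wdef)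

lemma Dshift:
  "D m (x0 + y) = D m x0 + H y + (m - m0 x0) ^ q * y ^ q - (m - m0 x0) * y"
proof -
  have cq: "(m - m0 x0) ^ q = m ^ q - 2 * \<alpha> ^ q * x0 ^ q - (\<beta> ^ q - \<beta>) * x0"
    by (simp add: m0_def)
  show ?thesis unfolding cq unfolding D_def H_def m0_def
    by (simp add: power2_eq_square algebra_simps)
qed

lemma D_m0: "D (m0 x) x = - H x - 2 * w * \<epsilon>"
  unfolding D_def H_def m0_def by (simp add: power2_eq_square algebra_simps)

lemma Hq: "(H x) ^ q = - H x"
  unfolding H_def by (simp add: power2_eq_square algebra_simps)

lemma H_scale: "t ^ q = t \<Longrightarrow> H (t * y) = t ^ 2 * H y"
  unfolding H_def by (simp add: power2_eq_square algebra_simps)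

lemma aniso: assumes "H x = 0" shows "x = 0"
proof (rule ccontr)
  assume x0: "x \<noteq> 0"
  have xq0: "x ^ q \<noteq> 0" using x0 by simp
  define u where "u = \<alpha> * x / x ^ q"
  have uq: "u ^ q = \<alpha> ^ q * x ^ q / x" unfolding u_def by (simp add: power_divide)
  define y where "y = u + u ^ q"
  have yK: "y \<in> subfield_q q" unfolding subfield_q_def y_def by (simp add: add.commute)
  have "\<alpha> * x ^ 2 - \<alpha> ^ q * (x ^ q) ^ 2 = - (\<beta> - \<beta> ^ q) * (x ^ q * x)"
    using assms unfolding H_def by (simp add: algebra_simps add_eq_0_iff2)
  hence diff: "u - u ^ q = \<beta> ^ q - \<beta>"
    unfolding uq unfolding u_def using x0 xq0
    by (simp add: field_simps power2_eq_square)
  have prod: "u * u ^ q = \<alpha> ^ (q + 1)"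
    unfolding uq unfolding u_def using x0 xq0 by (simp add: field_simps)
  have "y ^ 2 = (u - u ^ q) ^ 2 + 4 * (u * u ^ q)"
    unfolding y_def by (simp add: power2_eq_square algebra_simps)
  hence "y ^ 2 = (\<beta> ^ q - \<beta>) ^ 2 + 4 * \<alpha> ^ (q + 1)" unfolding diff prod .
  thus False using nonsq yK by blast
qed

definition f :: "'a \<Rightarrow> 'a \<Rightarrow> 'a" where
  "f m x = m * x + w * \<epsilon> - \<alpha> * x ^ 2 - \<beta> * x ^ (q + 1)"

lemma f_D: "(f m x) ^ q = f m x \<longleftrightarrow> D m x = 0"
proof -
  have "(f m x) ^ q - f m x = D m x"
    unfolding f_def D_def H_def s_q1 using wq
    by (simp add: power2_eq_square algebra_simps)
  thus ?thesis by (metis eq_iff_diff_eq_0)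
qed


lemma Dm0_shift: "D (m0 x0) x = D (m0 x0) x0 + H (x - x0)"
  using Dshift[of "m0 x0" x0 "x - x0"] by simp

lemma U_aff:
  "pt (x, y, 1) \<in> unital_ab q \<alpha> \<beta> \<longleftrightarrow>
     (y - \<alpha> * x ^ 2 - \<beta> * x ^ (q + 1)) ^ q = y - \<alpha> * x ^ 2 - \<beta> * x ^ (q + 1)"
proof
  assume "pt (x, y, 1) \<in> unital_ab q \<alpha> \<beta>"
  then consider (a) x' r where "pt (x, y, 1) = pt (x', \<alpha> * x' ^ 2 + \<beta> * x' ^ (q + 1) + r, 1)"
      "r \<in> subfield_q q"
    | (b) "pt (x, y, 1) = pt (0, 1, 0)"
    unfolding unital_ab_def by blast
  thus "(y - \<alpha> * x ^ 2 - \<beta> * x ^ (q + 1)) ^ q = y - \<alpha> * x ^ 2 - \<beta> * x ^ (q + 1)"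
  proof cases
    case a
    from pt_eq_aff[OF a(1)] have "x = x'" "y = \<alpha> * x' ^ 2 + \<beta> * x' ^ (q + 1) + r" by auto
    hence "y - \<alpha> * x ^ 2 - \<beta> * x ^ (q + 1) = r" by simp
    thus ?thesis using a(2) unfolding subfield_q_def by simp
  next
    case b
    thus ?thesis using pt_aff_ne_inf by blast
  qed
next
  assume h: "(y - \<alpha> * x ^ 2 - \<beta> * x ^ (q + 1)) ^ q = y - \<alpha> * x ^ 2 - \<beta> * x ^ (q + 1)"
  define r where "r = y - \<alpha> * x ^ 2 - \<beta> * x ^ (q + 1)"
  have "r \<in> subfield_q q" using h unfolding subfield_q_def r_def by simp
  moreover have "y = \<alpha> * x ^ 2 + \<beta> * x ^ (q + 1) + r" unfolding r_def by simp
  ultimately show "pt (x, y, 1) \<in> unital_ab q \<alpha> \<beta>" unfolding unital_ab_def by blast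
qed

lemma U_line: "pt (x, m * x + w * \<epsilon>, 1) \<in> unital_ab q \<alpha> \<beta> \<longleftrightarrow> D m x = 0"
proof -
  have "m * x + w * \<epsilon> - \<alpha> * x ^ 2 - \<beta> * x ^ (q + 1) = f m x" by (simp add: f_def)
  thus ?thesis unfolding U_aff using f_D by simp
qed

lemma U_cases: "P \<in> unital_ab q \<alpha> \<beta> \<Longrightarrow> P = pt (0, 1, 0) \<or> (\<exists>x y. P = pt (x, y, 1))"
  unfolding unital_ab_def by blast

lemma inf_in_U: "pt (0, 1, 0) \<in> unital_ab q \<alpha> \<beta>"
  unfolding unital_ab_def by blast

lemma tangent_char:
  assumes "Q \<in> pedal (unital_ab q \<alpha> \<beta>) (pt (0, w * \<epsilon>, 1))"
  shows "\<exists>x0. Q = pt (x0, m0 x0 * x0 + w * \<epsilon>, 1) \<and> H x0 + 2 * w * \<epsilon> = 0"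
proof -
  let ?U = "unital_ab q \<alpha> \<beta>"
  obtain l where tl: "tangent_line ?U l" and R2l: "pt (0, w * \<epsilon>, 1) \<in> l" and lU: "l \<inter> ?U = {Q}"
    using assms unfolding pedal_def by blast
  from tl obtain a where a0: "a \<noteq> (0, 0, 0)" and la: "l = pg_line a"
    unfolding tangent_line_def pg_lines_def by blast
  obtain a1 a2 a3 where aa: "a = (a1, a2, a3)" by (cases a) auto
  have R2eq: "a2 * (w * \<epsilon>) + a3 = 0" using R2l unfolding la aa pt_in_line by simp
  show ?thesis
  proof (cases "a2 = 0")
    case True
    hence a3: "a3 = 0" using R2eq by simp
    have "pt (0, 1, 0) \<in> l \<inter> ?U" using inf_in_U True a3 unfolding la aa by (simp add: pt_in_line)
    moreover have "pt (0, 0, 1) \<in> l \<inter> ?U"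
    proof -
      have "pt (0, 0, 1) \<in> ?U" unfolding U_aff using q0 by (simp add: power_0_left)
      moreover have "pt (0, 0, 1) \<in> l" using True a3 unfolding la aa pt_in_line by simp
      ultimately show ?thesis by simp
    qed
    ultimately have "pt (0, 0, 1) = pt (0, 1, (0::'a))" using lU by blast
    thus ?thesis using pt_aff_ne_inf by blast
  next
    case False
    define m where "m = - a1 / a2"
    have a3: "a3 = - a2 * (w * \<epsilon>)" using R2eq by (simp add: eq_neg_iff_add_eq_0 algebra_simps)
    have online: "pt (x, y, 1) \<in> l \<longleftrightarrow> y = m * x + w * \<epsilon>" for x y
    proof -
      have "a1 * x + a2 * y + a3 = a2 * (y - m * x - w * \<epsilon>)"
        unfolding m_def a3 using False by (simp add: field_simps)
      also have "\<dots> = a2 * (y - (m * x + w * \<epsilon>))" by (simp add: algebra_simps)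
      finally have "a1 * x + a2 * y + a3 = 0 \<longleftrightarrow> y = m * x + w * \<epsilon>" using False by simp
      thus ?thesis unfolding la aa pt_in_line by simp
    qed
    have infnot: "pt (0, 1, 0) \<notin> l" using False unfolding la aa pt_in_line by simp
    have QU: "Q \<in> ?U" "Q \<in> l" using lU by auto
    obtain x0 y0 where Q: "Q = pt (x0, y0, 1)" using U_cases[OF QU(1)] infnot QU(2) by blast
    have y0: "y0 = m * x0 + w * \<epsilon>" using QU(2) unfolding Q online .
    have Dx0: "D m x0 = 0" using QU(1) unfolding Q y0 U_line .
    have uniq: "x = x0" if "D m x = 0" for x
    proof -
      have "pt (x, m * x + w * \<epsilon>, 1) \<in> l \<inter> ?U" using that online U_line by simp
      hence "pt (x, m * x + w * \<epsilon>, 1) = pt (x0, y0, 1)" using lU Q by blast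
      thus ?thesis using pt_eq_aff by blast
    qed
    define c where "c = m - m0 x0"
    have c0: "c = 0"
    proof (rule ccontr)
      assume cnz: "c \<noteq> 0"
      define y1 where "y1 = \<epsilon> / c"
      have y1nz: "y1 \<noteq> 0" unfolding y1_def using cnz e0 by simp
      have cy1: "c * y1 = \<epsilon>" unfolding y1_def using cnz by simp
      have Hnz: "H y1 \<noteq> 0" using aniso y1nz by blast
      define t where "t = 2 * \<epsilon> / H y1"
      have tq: "t ^ q = t" unfolding t_def using Hq eq by (simp add: power_divide)
      have tnz: "t \<noteq> 0" unfolding t_def using two e0 Hnz by simp
      have "D m (x0 + t * y1) = D m x0 + H (t * y1) + c ^ q * (t * y1) ^ q - c * (t * y1)"
        using Dshift[of m x0 "t * y1"] unfolding c_def by simp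
      also have "\<dots> = t ^ 2 * H y1 + t * (c * y1) ^ q - t * (c * y1)"
        using Dx0 tq unfolding H_scale[OF tq] by (simp add: algebra_simps)
      also have "\<dots> = t * (t * H y1 - 2 * \<epsilon>)"
        unfolding cy1 eq by (simp add: algebra_simps power2_eq_square)
      also have "t * H y1 = 2 * \<epsilon>" unfolding t_def using Hnz by simp
      finally have "D m (x0 + t * y1) = 0" by simp
      hence "x0 + t * y1 = x0" by (rule uniq)
      thus False using tnz y1nz by simp
    qed
    hence mm: "m = m0 x0" unfolding c_def by simp
    have "- (H x0 + 2 * w * \<epsilon>) = 0" using Dx0 unfolding mm D_m0 by simp
    hence "H x0 + 2 * w * \<epsilon> = 0" by (simp only: neg_equal_0_iff_equal)
    moreover have "Q = pt (x0, m0 x0 * x0 + w * \<epsilon>, 1)" unfolding Q y0 mm ..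
    ultimately show ?thesis by blast
  qed
qed

lemma tangent_exists:
  assumes cond: "H x0 + 2 * w * \<epsilon> = 0"
  shows "pt (x0, m0 x0 * x0 + w * \<epsilon>, 1) \<in> pedal (unital_ab q \<alpha> \<beta>) (pt (0, w * \<epsilon>, 1))"
proof -
  let ?U = "unital_ab q \<alpha> \<beta>"
  define m where "m = m0 x0"
  define l where "l = pg_line (- m, 1, - (w * \<epsilon>))"
  define Q where "Q = pt (x0, m * x0 + w * \<epsilon>, 1)"
  have online: "pt (x, y, 1) \<in> l \<longleftrightarrow> y = m * x + w * \<epsilon>" for x y
  proof -
    have "- m * x + 1 * y + - (w * \<epsilon>) * 1 = 0 \<longleftrightarrow> y = m * x + w * \<epsilon>" by (auto simp: algebra_simps)
    thus ?thesis unfolding l_def pt_in_line by simp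
  qed
  have "D m x0 = - (H x0 + 2 * w * \<epsilon>)" unfolding m_def D_m0 by simp
  hence Dx0: "D m x0 = 0" using cond by simp
  have lU: "l \<inter> ?U = {Q}"
  proof
    show "{Q} \<subseteq> l \<inter> ?U" unfolding Q_def using online U_line Dx0 by simp
  next
    show "l \<inter> ?U \<subseteq> {Q}"
    proof
      fix P assume P: "P \<in> l \<inter> ?U"
      have "P \<noteq> pt (0, 1, 0)"
      proof
        assume "P = pt (0, 1, 0)"
        hence "pt (0, 1, 0) \<in> l" using P by simp
        thus False unfolding l_def pt_in_line by simp
      qed
      then obtain x y where Pxy: "P = pt (x, y, 1)" using U_cases P by blast
      have y: "y = m * x + w * \<epsilon>" using P unfolding Pxy by (simp add: online)
      have "D m x = 0" using P unfolding Pxy y by (simp add: U_line)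
      hence "H (x - x0) = 0" using Dm0_shift[of x0 x] Dx0 unfolding m_def by simp
      hence "x - x0 = 0" by (rule aniso)
      hence "x = x0" by simp
      thus "P \<in> {Q}" unfolding Pxy y Q_def by simp
    qed
  qed
  have "(- m, 1::'a, - (w * \<epsilon>)) \<noteq> (0, 0, 0)" by simp
  hence lline: "l \<in> pg_lines" unfolding l_def pg_lines_def by blast
  have tl: "tangent_line ?U l" unfolding tangent_line_def using lline lU by simp
  have R2: "pt (0, w * \<epsilon>, 1) \<in> l" unfolding l_def pt_in_line by simp
  show ?thesis unfolding pedal_def using tl R2 lU unfolding Q_def m_def by blast
qed

lemma in_pencil:
  assumes cond: "H x0 + 2 * w * \<epsilon> = 0"
  shows "pt (x0, m0 x0 * x0 + w * \<epsilon>, 1) \<in>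
    \<Union> (pencil (pt (1, 0, 0)) ({pt (0, s - w * \<epsilon>, 1) | s. s \<in> subfield_q q} \<union> {pt (0, 1, 0)}))"
proof -
  define y0 where "y0 = m0 x0 * x0 + w * \<epsilon>"
  define l where "l = pg_line (0, 1, - y0)"
  define s where "s = y0 + w * \<epsilon>"
  have s_eq: "s = \<alpha> * x0 ^ 2 + \<alpha> ^ q * (x0 ^ q) ^ 2"
  proof -
    have "- H x0 = 2 * w * \<epsilon>" using cond by (simp only: neg_eq_iff_add_eq_0)
    hence "2 * w * \<epsilon> = - H x0" by simp
    hence "s = m0 x0 * x0 - H x0" unfolding s_def y0_def by (simp add: algebra_simps)
    thus ?thesis unfolding m0_def H_def by (simp add: algebra_simps power2_eq_square)
  qed
  have sK: "s \<in> subfield_q q" unfolding subfield_q_def s_eq by (simp add: add.commute)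
  have E: "pt (0, s - w * \<epsilon>, 1) \<in> l" unfolding l_def pt_in_line s_def by simp
  have V: "pt (1, 0, 0) \<in> l" unfolding l_def pt_in_line by simp
  have P: "pt (x0, y0, 1) \<in> l" unfolding l_def pt_in_line by simp
  have "(0::'a, 1::'a, - y0) \<noteq> (0, 0, 0)" by simp
  hence ll: "l \<in> pg_lines" unfolding l_def pg_lines_def by blast
  have "l \<in> pencil (pt (1, 0, 0)) ({pt (0, s - w * \<epsilon>, 1) | s. s \<in> subfield_q q} \<union> {pt (0, 1, 0)})"
    unfolding pencil_def using ll V E sK by blast
  thus ?thesis using P unfolding y0_def by blast
qed

lemma cond_eq:
  "\<alpha> * x ^ 2 - \<alpha> ^ q * x ^ (2 * q) + (\<beta> - \<beta> ^ q) * x ^ (q + 1) + 2 * w * \<epsilon> = H x + 2 * w * \<epsilon>"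
  unfolding H_def s_sq' s_q1 by simp

lemma y_eq:
  "2 * \<alpha> * x ^ 2 + (\<beta> - \<beta> ^ q) * x ^ (q + 1) + w * \<epsilon> = m0 x * x + w * \<epsilon>"
  unfolding m0_def s_q1 by (simp add: algebra_simps power2_eq_square)

lemma geo:
  shows "(pedal (unital_ab q \<alpha> \<beta>) (pt (0, w * \<epsilon>, 1)) =
           {pt (x, 2 * \<alpha> * x ^ 2 + (\<beta> - \<beta> ^ q) * x ^ (q + 1) + w * \<epsilon>, 1) | x.
              \<alpha> * x ^ 2 - \<alpha> ^ q * x ^ (2 * q) + (\<beta> - \<beta> ^ q) * x ^ (q + 1) + 2 * w * \<epsilon> = 0}) \<and>
         pedal (unital_ab q \<alpha> \<beta>) (pt (0, w * \<epsilon>, 1)) \<subseteq>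
           \<Union> (pencil (pt (1, 0, 0))
                ({pt (0, s - w * \<epsilon>, 1) | s. s \<in> subfield_q q} \<union> {pt (0, 1, 0)}))"
proof (intro conjI)
  show eq1: "pedal (unital_ab q \<alpha> \<beta>) (pt (0, w * \<epsilon>, 1)) =
           {pt (x, 2 * \<alpha> * x ^ 2 + (\<beta> - \<beta> ^ q) * x ^ (q + 1) + w * \<epsilon>, 1) | x.
              \<alpha> * x ^ 2 - \<alpha> ^ q * x ^ (2 * q) + (\<beta> - \<beta> ^ q) * x ^ (q + 1) + 2 * w * \<epsilon> = 0}"
    unfolding cond_eq y_eq using tangent_char tangent_exists by blast
  show "pedal (unital_ab q \<alpha> \<beta>) (pt (0, w * \<epsilon>, 1)) \<subseteq>
           \<Union> (pencil (pt (1, 0, 0))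
                ({pt (0, s - w * \<epsilon>, 1) | s. s \<in> subfield_q q} \<union> {pt (0, 1, 0)}))"
    using tangent_char in_pencil by blast
qed

end


theorem lemma2p6:
  fixes q :: nat and \<zeta> \<alpha> \<beta> :: "'a::field"
  assumes fin: "finite (UNIV :: 'a set)"
    and card: "card (UNIV :: 'a set) = q ^ 2"
    and odd: "odd q"
    and prim: "primitive_elem \<zeta>"
    and anz: "\<alpha> \<noteq> 0"
    and nonsq: "\<not> (\<exists>y \<in> subfield_q q. y ^ 2 = (\<beta> ^ q - \<beta>) ^ 2 + 4 * \<alpha> ^ (q + 1))"
  defines "\<epsilon> \<equiv> \<zeta> ^ ((q + 1) div 2)"
  defines "w \<equiv> \<epsilon> ^ 2"
  defines "R2 \<equiv> pt (0, w * \<epsilon>, 1)"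
  defines "U \<equiv> unital_ab q \<alpha> \<beta>"
  shows "(pedal U R2 =
           {pt (x, 2 * \<alpha> * x ^ 2 + (\<beta> - \<beta> ^ q) * x ^ (q + 1) + w * \<epsilon>, 1) | x.
              \<alpha> * x ^ 2 - \<alpha> ^ q * x ^ (2 * q) + (\<beta> - \<beta> ^ q) * x ^ (q + 1) + 2 * w * \<epsilon> = 0}) \<and>
         pedal U R2 \<subseteq>
           \<Union> (pencil (pt (1, 0, 0))
                ({pt (0, s - w * \<epsilon>, 1) | s. s \<in> subfield_q q} \<union> {pt (0, 1, 0)}))"
  proof -
  have fa: "\<And>x y :: 'a. (x + y) ^ q = x ^ q + y ^ q" using frob_add[OF fin card] .
  have inv: "\<And>x :: 'a. (x ^ q) ^ q = x" using frob_invol[OF fin card] .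
  have two: "(2::'a) \<noteq> 0" using two_nz[OF fin card odd] .
  have ep: "\<epsilon> \<noteq> 0 \<and> \<epsilon> ^ q = - \<epsilon>" unfolding \<epsilon>_def using eps_props[OF fin card odd prim] .
  have wd: "w = \<epsilon> ^ 2" unfolding w_def ..
  interpret frobq q \<alpha> \<beta> \<epsilon> w
    by (rule frobq.intro) (use fa inv two odd ep wd anz nonsq in auto)
  show ?thesis unfolding R2_def U_def by (rule geo)
qed

end
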